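(* Let $A$ be a nonempty set of positive integers and let $n$ be a positive integer. Then (a) $\displaystyle\sum_{k=1}^{n}N^p_A(k)\,\omega(n-k)=\sum_{k=1}^{n}\tau_A(k)\big(q^e_{\mathbb N\setminus A}(n-k)-q^o_{\mathbb N\setminus A}(n-k)\big)$; (b) $\displaystyle\sum_{k=1}^{n}(-1)^{n-k}N^q_A(k)\,o(n-k)=\sum_{k=1}^{n}\tau^s_A(k)\big(p^e_{\mathbb N\setminus A}(n-k)-p^o_{\mathbb N\setminus A}(n-k)\big)$.
   Context: $\mathbb N$ is the set of positive integers. For a set $B$ of positive integers: $N^p_B(n)$ (resp. $N^q_B(n)$) is the total number of parts, summed over all partitions (resp. partitions into pairwise distinct parts) of $n$ with parts in $B$; $p^e_B(m)$, $p^o_B(m)$ count partitions of $m$ with parts in $B$ having an even, resp. odd, number of parts; $q^e_B(m)$, $q^o_B(m)$ are the analogous counts for partitions into distinct parts from $B$; $p^e_B(0)=q^e_B(0)=1$, $p^o_B(0)=q^o_B(0)=0$. $\tau_A(n)=\#\{a\in A:a\mid n\}$, $\tau^s_A(n)=\sum_{a\in A,\,a\mid n}(-1)^{n/a-1}$. $\omega(m)=1$ if $m=0$, $\omega(m)=(-1)^k$ if $m=\frac{3k^2\pm k}{2}$ for an integer $k\ge1$, and $0$ otherwise. $o(m)$ is the number of partitions of $m$ into distinct odd parts, $o(0)=1$. *)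

theory Defs
  imports Main "HOL-Library.Multiset"
begin

(* Sets of positive integers are modelled as nat sets not containing 0. *)

definition partitions :: "nat set \<Rightarrow> nat \<Rightarrow> nat multiset set" where
  "partitions B n = {M. set_mset M \<subseteq> B \<and> 0 \<notin> set_mset M \<and> sum_mset M = n}"

definition dpartitions :: "nat set \<Rightarrow> nat \<Rightarrow> nat set set" where
  "dpartitions B n = {S. finite S \<and> S \<subseteq> B \<and> 0 \<notin> S \<and> \<Sum>S = n}"

definition Np :: "nat set \<Rightarrow> nat \<Rightarrow> int" where
  "Np B n = (\<Sum>M\<in>partitions B n. int (size M))"

definition Nq :: "nat set \<Rightarrow> nat \<Rightarrow> int" where
  "Nq B n = (\<Sum>S\<in>dpartitions B n. int (card S))"

definition pe :: "nat set \<Rightarrow> nat \<Rightarrow> int" where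
  "pe B m = int (card {M\<in>partitions B m. even (size M)})"
definition po :: "nat set \<Rightarrow> nat \<Rightarrow> int" where
  "po B m = int (card {M\<in>partitions B m. odd (size M)})"
definition qe :: "nat set \<Rightarrow> nat \<Rightarrow> int" where
  "qe B m = int (card {S\<in>dpartitions B m. even (card S)})"
definition qo :: "nat set \<Rightarrow> nat \<Rightarrow> int" where
  "qo B m = int (card {S\<in>dpartitions B m. odd (card S)})"

definition tauA :: "nat set \<Rightarrow> nat \<Rightarrow> int" where
  "tauA A n = int (card {a\<in>A. a dvd n})"

definition tausA :: "nat set \<Rightarrow> nat \<Rightarrow> int" where
  "tausA A n = (\<Sum>a\<in>{a\<in>A. a dvd n}. (-1) ^ (n div a - 1))"

definition pent :: "nat \<Rightarrow> nat \<Rightarrow> bool" where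
  "pent m k \<longleftrightarrow> k \<ge> 1 \<and> (2 * m = 3 * k^2 + k \<or> 2 * m = 3 * k^2 - k)"

definition omega :: "nat \<Rightarrow> int" where
  "omega m = (if m = 0 then 1
              else if \<exists>k. pent m k then (-1) ^ (THE k. pent m k) else 0)"

definition odp :: "nat \<Rightarrow> int" where
  "odp m = int (card (dpartitions {k. odd k} m))"

definition compl_pos :: "nat set \<Rightarrow> nat set" where
  "compl_pos A = {k. k > 0 \<and> k \<notin> A}"

end

theory Submission
  imports Defs "HOL-Computational_Algebra.Formal_Power_Series"
begin

unbundle fps_syntax




definition tri :: "nat \<Rightarrow> nat" where "tri j = j * (j + 1) div 2"

lemma tri_0 [simp]: "tri 0 = 0" by (simp add: tri_def)
lemma tri_Suc: "tri (Suc j) = tri j + Suc j"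
  unfolding tri_def by (induction j) auto

lemma tri_pos: "j \<ge> 1 \<Longrightarrow> tri j \<ge> 1"
  by (cases j) (auto simp: tri_Suc)

lemma two_tri: "2 * tri j = j * (j + 1)"
  by (induction j) (auto simp: tri_Suc)

definition FF :: "nat \<Rightarrow> nat \<Rightarrow> int fps" where
  "FF n j = (-1)^j * fps_X^(tri j + n*j) * (\<Prod>k\<in>{Suc j..n}. (1 - fps_X^k))"

definition HH :: "nat \<Rightarrow> nat \<Rightarrow> int fps" where
  "HH n j = (-1)^j * fps_X^(tri j + n*j) * (\<Prod>k\<in>{j..n}. (1 - fps_X^k))"

lemma FF_step:
  assumes "j \<le> n"
  shows "FF (Suc n) j - FF n j = HH n (Suc j) - HH n j"
proof -
  define P :: "int fps" where "P = (\<Prod>k\<in>{Suc j..n}. (1 - fps_X^k))"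
  define s :: "int fps" where "s = (-1)^j"
  define Y :: "int fps" where "Y = fps_X^(tri j + n*j)"
  have p1: "(\<Prod>k\<in>{Suc j..Suc n}. (1 - fps_X^k)) = (1 - fps_X^(Suc n)) * P"
    unfolding P_def using assms by (simp add: prod.nat_ivl_Suc')
  have p2: "(\<Prod>k\<in>{j..n}. (1 - fps_X^k)) = (1 - fps_X^j) * P"
    unfolding P_def using assms by (simp add: prod.atLeast_Suc_atMost)
  have e1: "(fps_X::int fps)^(tri j + Suc n * j) = Y * fps_X^j"
    unfolding Y_def by (simp add: power_add[symmetric] algebra_simps)
  have e2: "(fps_X::int fps)^(tri (Suc j) + n * Suc j) = Y * fps_X^j * fps_X^(Suc n)"
    unfolding Y_def by (simp add: power_add[symmetric] algebra_simps tri_Suc)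
  have "FF (Suc n) j - FF n j = s * P * (Y * fps_X^j - Y * fps_X^j * fps_X^(Suc n) - Y)"
    unfolding FF_def p1 e1 s_def Y_def[symmetric] P_def[symmetric] by (simp add: algebra_simps)
  also have "\<dots> = HH n (Suc j) - HH n j"
    unfolding HH_def p2 e2 s_def Y_def[symmetric] P_def[symmetric] by (simp add: algebra_simps)
  finally show ?thesis .
qed

definition RR :: "nat \<Rightarrow> int fps" where
  "RR n = 1 + (\<Sum>k\<in>{1..n}. (-1)^k * (fps_X^(tri k + (k - 1) * k) + fps_X^(tri k + k * k)))"

lemma shanks: "(\<Sum>j\<le>n. FF n j) = RR n"
proof (induction n)
  case 0
  then show ?case by (simp add: FF_def RR_def)
next
  case (Suc n)
  have "(\<Sum>j\<le>Suc n. FF (Suc n) j) = FF (Suc n) (Suc n) + (\<Sum>j<Suc n. FF (Suc n) j)"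
    by (simp add: lessThan_Suc_atMost[symmetric])
  also have "(\<Sum>j<Suc n. FF (Suc n) j) = (\<Sum>j<Suc n. FF n j + (HH n (Suc j) - HH n j))"
    by (rule sum.cong) (auto simp: FF_step[symmetric])
  also have "\<dots> = (\<Sum>j<Suc n. FF n j) + (\<Sum>j<Suc n. HH n (Suc j) - HH n j)"
    by (simp only: sum.distrib)
  also have "(\<Sum>j<Suc n. HH n (Suc j) - HH n j) = HH n (Suc n) - HH n 0"
    by (rule sum_lessThan_telescope)
  also have "(\<Sum>j<Suc n. FF n j) = (\<Sum>j\<le>n. FF n j)"
    by (simp add: lessThan_Suc_atMost)
  also have "HH n 0 = 0"
    unfolding HH_def by (subst prod_zero) (auto intro!: bexI[of _ 0])
  also have "HH n (Suc n) = (-1)^(Suc n) * fps_X^(tri (Suc n) + n * Suc n)"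
    by (simp add: HH_def)
  also have "FF (Suc n) (Suc n) = (-1)^(Suc n) * fps_X^(tri (Suc n) + Suc n * Suc n)"
    by (simp add: FF_def)
  finally show ?case using Suc.IH
    by (simp add: RR_def algebra_simps)
qed

definition eqn :: "nat \<Rightarrow> int fps \<Rightarrow> int fps \<Rightarrow> bool" where
  "eqn n f g \<longleftrightarrow> (\<forall>i\<le>n. f $ i = g $ i)"

lemma neg1_power_fps: "((-1::int fps)^k * f) $ m = (-1)^k * f $ m"
proof -
  have "(-1::int fps)^k = fps_const ((-1)^k)"
    by (induction k) (auto simp: fps_const_neg[symmetric] fps_const_mult[symmetric] simp del: fps_const_neg fps_const_mult)
  then show ?thesis by simp
qed

lemma E_coeff_RR:
  assumes "m \<le> n"
  shows "(\<Prod>k\<in>{1..n}. (1 - fps_X^k :: int fps)) $ m = RR n $ m"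
proof -
  have "RR n = FF n 0 + (\<Sum>j\<in>{Suc 0..n}. FF n j)"
    unfolding shanks[symmetric] atMost_atLeast0 by (simp add: sum.atLeast_Suc_atMost)
  moreover have "FF n 0 = (\<Prod>k\<in>{1..n}. (1 - fps_X^k :: int fps))"
    by (simp add: FF_def)
  moreover have "FF n j $ m = 0" if "j \<in> {Suc 0..n}" for j
  proof -
    have "tri j \<ge> 1" using that tri_pos by auto
    moreover have "n * j \<ge> n" using that by auto
    ultimately have lt: "m < tri j + n * j" using assms by linarith
    have "FF n j = fps_X^(tri j + n*j) * ((-1)^j * (\<Prod>k\<in>{Suc j..n}. (1 - fps_X^k)))"
      by (simp add: FF_def algebra_simps)
    then show ?thesis using lt by (simp add: fps_X_power_mult_nth)
  qed
  ultimately show ?thesis by (simp add: fps_sum_nth)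
qed

definition e1 :: "nat \<Rightarrow> nat" where "e1 k = tri k + (k - 1) * k"
definition e2 :: "nat \<Rightarrow> nat" where "e2 k = tri k + k * k"

lemma pent_iff: "pent m k \<longleftrightarrow> k \<ge> 1 \<and> (m = e1 k \<or> m = e2 k)"
proof (cases k)
  case 0
  then show ?thesis by (simp add: pent_def)
next
  case (Suc j)
  have a: "2 * e2 k = 3 * k^2 + k" unfolding e2_def using two_tri[of k]
    by (simp add: algebra_simps power2_eq_square)
  have b: "2 * e1 k = 3 * k^2 - k" unfolding e1_def using two_tri[of k] Suc
    by (simp add: algebra_simps power2_eq_square)
  show ?thesis unfolding pent_def a[symmetric] b[symmetric] using Suc by auto
qed

lemma e1_lt_e2: "k \<ge> 1 \<Longrightarrow> e1 k < e2 k"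
  by (cases k) (auto simp: e1_def e2_def)

lemma e1_le_e2: "e1 k \<le> e2 k"
  by (cases k) (auto simp: e1_def e2_def)

lemma e2_lt_e1_Suc: "e2 k < e1 (Suc k)"
  by (simp add: e1_def e2_def tri_Suc)

lemma e2_lt_e1: "k < k' \<Longrightarrow> e2 k < e1 k'"
proof (induction k')
  case 0
  then show ?case by simp
next
  case (Suc k')
  show ?case
  proof (cases "k = k'")
    case True
    then show ?thesis using e2_lt_e1_Suc by simp
  next
    case False
    then have "e2 k < e1 k'" using Suc by simp
    also have "\<dots> \<le> e2 k'" by (rule e1_le_e2)
    also have "\<dots> < e1 (Suc k')" by (rule e2_lt_e1_Suc)
    finally show ?thesis .
  qed
qed

lemma pent_unique: "pent m k \<Longrightarrow> pent m k' \<Longrightarrow> k = k'"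
proof (rule ccontr)
  assume h: "pent m k" "pent m k'" "k \<noteq> k'"
  have *: "False" if "pent m a" "pent m b" "a < b" for a b
  proof -
    have "m \<le> e2 a" using that(1) e1_le_e2[of a] by (auto simp: pent_iff)
    also have "\<dots> < e1 b" using that(3) by (rule e2_lt_e1)
    also have "\<dots> \<le> m" using that(2) e1_lt_e2[of b] by (auto simp: pent_iff)
    finally show False by simp
  qed
  show False using h *[of k k'] *[of k' k] by (cases "k < k'") auto
qed

lemma tri_ge: "k \<le> tri k"
  using two_tri[of k] by (cases k) auto

lemma pent_le: "pent m k \<Longrightarrow> k \<le> m"
  using tri_ge[of k] by (auto simp: pent_iff e1_def e2_def)

lemma RR_coeff:
  assumes "m \<le> n"
  shows "RR n $ m = omega m"
proof -
  define t where "t k = (-1::int)^k * ((if m = e1 k then 1 else 0) + (if m = e2 k then 1 else 0))" for k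
  have RRm: "RR n $ m = (if m = 0 then 1 else 0) + (\<Sum>k\<in>{1..n}. t k)"
    unfolding RR_def t_def by (simp add: fps_sum_nth neg1_power_fps e1_def e2_def)
  have t0: "t k = 0" if "\<not> pent m k" "k \<ge> 1" for k
    using that unfolding t_def pent_iff by auto
  show ?thesis
  proof (cases "m = 0")
    case True
    have "t k = 0" if "k \<in> {1..n}" for k
      using that True tri_pos[of k] unfolding t_def e1_def e2_def by auto
    then show ?thesis using RRm True by (simp add: omega_def)
  next
    case False
    show ?thesis
    proof (cases "\<exists>k. pent m k")
      case True
      then obtain k0 where k0: "pent m k0" by blast
      have the: "(THE k. pent m k) = k0" using k0 pent_unique by blast
      have k0n: "k0 \<in> {1..n}" using k0 pent_le[OF k0] assms by (auto simp: pent_iff)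
      have "(\<Sum>k\<in>{1..n}. t k) = t k0 + (\<Sum>k\<in>{1..n} - {k0}. t k)"
        using k0n by (simp add: sum.remove)
      also have "(\<Sum>k\<in>{1..n} - {k0}. t k) = 0"
        using t0 pent_unique k0 by (intro sum.neutral) (metis DiffE atLeastAtMost_iff singletonI)
      also have "t k0 = (-1)^k0"
        using k0 e1_lt_e2[of k0] unfolding t_def pent_iff by auto
      finally show ?thesis using RRm False True the by (simp add: omega_def)
    next
      case nP: False
      have "(\<Sum>k\<in>{1..n}. t k) = 0" using t0 nP by (intro sum.neutral) auto
      then show ?thesis using RRm False nP by (simp add: omega_def)
    qed
  qed
qed

lemma pentagonal:
  assumes "m \<le> n"
  shows "(\<Prod>k\<in>{1..n}. (1 - fps_X^k :: int fps)) $ m = omega m"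
  using E_coeff_RR[OF assms] RR_coeff[OF assms] by simp



lemma mem_le_sum_mset: "x \<in># M \<Longrightarrow> x \<le> sum_mset (M :: nat multiset)"
proof -
  assume "x \<in># M"
  then obtain M' where "M = add_mset x M'" using multi_member_split by metis
  then show ?thesis by simp
qed

lemma size_le_sum_mset: "0 \<notin># M \<Longrightarrow> size M \<le> sum_mset (M :: nat multiset)"
  by (induction M) auto



lemma size_as_sum_count:
  assumes "finite T" "set_mset M \<subseteq> T"
  shows "size M = (\<Sum>a\<in>T. count M a)"
  using assms(2)
proof (induction M)
  case empty
  then show ?case by simp
next
  case (add x M)
  have "(\<Sum>a\<in>T. count (add_mset x M) a) = (\<Sum>a\<in>T. count M a + (if a = x then 1 else 0))"
    by (intro sum.cong) auto
  also have "\<dots> = (\<Sum>a\<in>T. count M a) + 1"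
    using add.prems assms(1) by (simp add: sum.distrib)
  finally show ?case using add by simp
qed

lemma finite_partitions: "finite (partitions B m)"
proof -
  have "partitions B m \<subseteq> (\<Union>s\<in>{0..m}. multisets_of_size {0..m} s)"
  proof
    fix M assume "M \<in> partitions B m"
    then have h: "set_mset M \<subseteq> B" "0 \<notin># M" "sum_mset M = m" by (auto simp: partitions_def)
    then have "size M \<le> m" using size_le_sum_mset by metis
    moreover have "set_mset M \<subseteq> {0..m}" using h mem_le_sum_mset by auto
    ultimately show "M \<in> (\<Union>s\<in>{0..m}. multisets_of_size {0..m} s)"
      by (auto simp: multisets_of_size_def)
  qed
  then show ?thesis by (rule finite_subset) auto
qed

lemma finite_dpartitions: "finite (dpartitions B m)"
proof -
  have "dpartitions B m \<subseteq> Pow {0..m}"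
  proof
    fix S assume "S \<in> dpartitions B m"
    then have h: "finite S" "\<Sum>S = m" by (auto simp: dpartitions_def)
    have "x \<le> m" if "x \<in> S" for x using member_le_sum[of x S "\<lambda>x. x"] h that by auto
    then show "S \<in> Pow {0..m}" by auto
  qed
  then show ?thesis by (rule finite_subset) auto
qed


definition W :: "int \<Rightarrow> nat set \<Rightarrow> nat \<Rightarrow> int" where
  "W w B m = (\<Sum>M\<in>partitions B m. w ^ size M)"

definition V :: "int \<Rightarrow> nat set \<Rightarrow> nat \<Rightarrow> int" where
  "V w B m = (\<Sum>S\<in>dpartitions B m. w ^ card S)"

definition cnt :: "nat \<Rightarrow> nat set \<Rightarrow> nat \<Rightarrow> int" where
  "cnt a B m = (\<Sum>M\<in>partitions B m. int (count M a))"

definition dcnt :: "nat \<Rightarrow> nat set \<Rightarrow> nat \<Rightarrow> int" where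
  "dcnt a B m = int (card {S\<in>dpartitions B m. a \<in> S})"

lemma partitions_notin:
  "a \<notin> S \<Longrightarrow> {M\<in>partitions (insert a S) m. a \<notin># M} = partitions S m"
  by (auto simp: partitions_def)

lemma partitions_in_bij:
  assumes "a \<in> B" "a > 0" "a \<le> m"
  shows "bij_betw (add_mset a) (partitions B (m - a)) {M\<in>partitions B m. a \<in># M}"
proof (rule bij_betw_byWitness[where f' = "\<lambda>M. M - {#a#}"])
  show "\<forall>M\<in>partitions B (m - a). add_mset a M - {#a#} = M" by simp
  show "\<forall>M\<in>{M \<in> partitions B m. a \<in># M}. add_mset a (M - {#a#}) = M" by simp
  show "add_mset a ` partitions B (m - a) \<subseteq> {M \<in> partitions B m. a \<in># M}"
    using assms by (auto simp: partitions_def)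
  show "(\<lambda>M. M - {#a#}) ` {M \<in> partitions B m. a \<in># M} \<subseteq> partitions B (m - a)"
  proof
    fix N assume "N \<in> (\<lambda>M. M - {#a#}) ` {M \<in> partitions B m. a \<in># M}"
    then obtain M where M: "M \<in> partitions B m" "a \<in># M" "N = M - {#a#}" by auto
    then have "M = add_mset a N" by simp
    then show "N \<in> partitions B (m - a)" using M(1)
      by (auto simp: partitions_def dest: in_diffD)
  qed
qed

lemma partitions_in_empty:
  assumes "m < a"
  shows "{M\<in>partitions B m. a \<in># M} = {}"
  using assms mem_le_sum_mset by (fastforce simp: partitions_def)

lemma sum_partitions_split:
  assumes "a \<in> B" "a > 0"
  shows "(\<Sum>M\<in>partitions B m. f M) = (\<Sum>M\<in>partitions (B - {a}) m. f M) +
           (if a \<le> m then (\<Sum>M\<in>partitions B (m - a). f (add_mset a M)) else 0)"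
proof -
  have B: "B = insert a (B - {a})" using assms by auto
  have "(\<Sum>M\<in>partitions B m. f M) = (\<Sum>M\<in>{M\<in>partitions B m. a \<notin># M}. f M) + (\<Sum>M\<in>{M\<in>partitions B m. a \<in># M}. f M)"
    by (subst sum.union_disjoint[symmetric]) (auto simp: finite_partitions intro: sum.cong)
  also have "{M\<in>partitions B m. a \<notin># M} = partitions (B - {a}) m"
    using partitions_notin[of a "B - {a}" m] B by simp
  also have "(\<Sum>M\<in>{M\<in>partitions B m. a \<in># M}. f M) =
      (if a \<le> m then (\<Sum>M\<in>partitions B (m - a). f (add_mset a M)) else 0)"
  proof (cases "a \<le> m")
    case True
    then show ?thesis using sum.reindex_bij_betw[OF partitions_in_bij[OF assms True], of f] by simp
  next
    case False
    have e: "{M\<in>partitions B m. a \<in># M} = {}" using False by (intro partitions_in_empty) simp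
    show ?thesis unfolding e using False by simp
  qed
  finally show ?thesis .
qed

lemma dpartitions_notin:
  "{S\<in>dpartitions B m. a \<notin> S} = dpartitions (B - {a}) m"
  by (auto simp: dpartitions_def)

lemma dpartitions_in_bij:
  assumes "a \<in> B" "a > 0" "a \<le> m"
  shows "bij_betw (insert a) (dpartitions (B - {a}) (m - a)) {S\<in>dpartitions B m. a \<in> S}"
proof (rule bij_betw_byWitness[where f' = "\<lambda>S. S - {a}"])
  show "\<forall>S\<in>dpartitions (B - {a}) (m - a). insert a S - {a} = S" by (auto simp: dpartitions_def)
  show "\<forall>S\<in>{S \<in> dpartitions B m. a \<in> S}. insert a (S - {a}) = S" by auto
  show "insert a ` dpartitions (B - {a}) (m - a) \<subseteq> {S \<in> dpartitions B m. a \<in> S}"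
  proof
    fix T assume "T \<in> insert a ` dpartitions (B - {a}) (m - a)"
    then obtain S where S: "S \<in> dpartitions (B - {a}) (m - a)" "T = insert a S" by auto
    then have "finite S" "a \<notin> S" "\<Sum>S = m - a" "S \<subseteq> B" "0 \<notin> S" by (auto simp: dpartitions_def)
    then have "\<Sum>T = m" using S(2) assms by simp
    then show "T \<in> {S \<in> dpartitions B m. a \<in> S}"
      using S assms \<open>finite S\<close> \<open>S \<subseteq> B\<close> \<open>0 \<notin> S\<close> by (auto simp: dpartitions_def)
  qed
  show "(\<lambda>S. S - {a}) ` {S \<in> dpartitions B m. a \<in> S} \<subseteq> dpartitions (B - {a}) (m - a)"
  proof
    fix T assume "T \<in> (\<lambda>S. S - {a}) ` {S \<in> dpartitions B m. a \<in> S}"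
    then obtain S where S: "S \<in> dpartitions B m" "a \<in> S" "T = S - {a}" by auto
    then have "finite S" "\<Sum>S = m" by (auto simp: dpartitions_def)
    then have "\<Sum>T = m - a" using S sum.remove[of S a "\<lambda>x. x"] by simp
    then show "T \<in> dpartitions (B - {a}) (m - a)" using S
      by (auto simp: dpartitions_def)
  qed
qed

lemma dpartitions_in_empty:
  assumes "m < a"
  shows "{S\<in>dpartitions B m. a \<in> S} = {}"
proof -
  have "False" if "S \<in> dpartitions B m" "a \<in> S" for S
    using that member_le_sum[of a S "\<lambda>x. x"] assms by (auto simp: dpartitions_def)
  then show ?thesis by auto
qed

lemma sum_dpartitions_split:
  assumes "a \<in> B" "a > 0"
  shows "(\<Sum>S\<in>dpartitions B m. f S) = (\<Sum>S\<in>dpartitions (B - {a}) m. f S) +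
           (if a \<le> m then (\<Sum>S\<in>dpartitions (B - {a}) (m - a). f (insert a S)) else 0)"
proof -
  have "(\<Sum>S\<in>dpartitions B m. f S) = (\<Sum>S\<in>{S\<in>dpartitions B m. a \<notin> S}. f S) + (\<Sum>S\<in>{S\<in>dpartitions B m. a \<in> S}. f S)"
    by (subst sum.union_disjoint[symmetric]) (auto simp: finite_dpartitions intro: sum.cong)
  also have "{S\<in>dpartitions B m. a \<notin> S} = dpartitions (B - {a}) m"
    by (rule dpartitions_notin)
  also have "(\<Sum>S\<in>{S\<in>dpartitions B m. a \<in> S}. f S) =
      (if a \<le> m then (\<Sum>S\<in>dpartitions (B - {a}) (m - a). f (insert a S)) else 0)"
  proof (cases "a \<le> m")
    case True
    then show ?thesis using sum.reindex_bij_betw[OF dpartitions_in_bij[OF assms True], of f] by simp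
  next
    case False
    have e: "{S\<in>dpartitions B m. a \<in> S} = {}" using False by (intro dpartitions_in_empty) simp
    show ?thesis unfolding e using False by simp
  qed
  finally show ?thesis .
qed


definition WF :: "int \<Rightarrow> nat set \<Rightarrow> int fps" where "WF w B = Abs_fps (W w B)"
definition VF :: "int \<Rightarrow> nat set \<Rightarrow> int fps" where "VF w B = Abs_fps (V w B)"


lemma W_rec:
  assumes "a \<in> B" "a > 0"
  shows "W w B m = W w (B - {a}) m + (if a \<le> m then w * W w B (m - a) else 0)"
  unfolding W_def by (subst sum_partitions_split[OF assms]) (simp add: sum_distrib_left)

lemma WF_rec:
  assumes "a \<in> B" "a > 0"
  shows "WF w B * (1 - fps_const w * fps_X^a) = WF w (B - {a})"
proof (rule fps_ext)
  fix m
  have "WF w B * (1 - fps_const w * fps_X^a) = WF w B - fps_X^a * (fps_const w * WF w B)"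
    by (simp add: algebra_simps)
  then show "(WF w B * (1 - fps_const w * fps_X^a)) $ m = WF w (B - {a}) $ m"
    using W_rec[OF assms, of w m] by (simp add: WF_def fps_X_power_mult_nth)
qed

lemma partitions_empty: "partitions {} m = (if m = 0 then {{#}} else {})"
  by (auto simp: partitions_def)

lemma dpartitions_empty: "dpartitions {} m = (if m = 0 then {{}} else {})"
  by (auto simp: dpartitions_def)

lemma WF_empty: "WF w {} = 1"
  by (rule fps_ext) (simp add: WF_def W_def partitions_empty)

lemma VF_empty: "VF w {} = 1"
  by (rule fps_ext) (simp add: VF_def V_def dpartitions_empty)

lemma WF_finite:
  assumes "finite S" "0 \<notin> S"
  shows "WF w S * (\<Prod>k\<in>S. 1 - fps_const w * fps_X^k) = 1"
  using assms
proof (induction S rule: finite_induct)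
  case empty
  then show ?case by (simp add: WF_empty)
next
  case (insert a S)
  have apos: "0 < a" using insert by auto
  have eq: "insert a S - {a} = S" using insert.hyps by auto
  have r: "WF w (insert a S) * (1 - fps_const w * fps_X^a) = WF w S"
    by (rule WF_rec[of a "insert a S" w, OF insertI1 apos, unfolded eq])
  have "WF w (insert a S) * (\<Prod>k\<in>insert a S. 1 - fps_const w * fps_X^k)
      = WF w (insert a S) * ((1 - fps_const w * fps_X^a) * (\<Prod>k\<in>S. 1 - fps_const w * fps_X^k))"
    by (simp only: prod.insert[OF insert.hyps(1) insert.hyps(2)])
  also have "\<dots> = (WF w (insert a S) * (1 - fps_const w * fps_X^a)) * (\<Prod>k\<in>S. 1 - fps_const w * fps_X^k)"
    by (simp only: mult.assoc)
  also have "\<dots> = WF w S * (\<Prod>k\<in>S. 1 - fps_const w * fps_X^k)"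
    by (simp only: r)
  finally show ?case using insert.IH insert.prems by simp
qed

lemma V_rec:
  assumes "a \<in> B" "a > 0"
  shows "V w B m = V w (B - {a}) m + (if a \<le> m then w * V w (B - {a}) (m - a) else 0)"
proof -
  have "(\<Sum>S\<in>dpartitions (B - {a}) (m - a). w ^ card (insert a S)) = w * V w (B - {a}) (m - a)"
    unfolding V_def sum_distrib_left
    by (intro sum.cong) (auto simp: dpartitions_def card_insert_if)
  then show ?thesis
    unfolding V_def by (subst sum_dpartitions_split[OF assms]) simp
qed

lemma VF_rec:
  assumes "a \<in> B" "a > 0"
  shows "VF w B = (1 + fps_const w * fps_X^a) * VF w (B - {a})"
proof (rule fps_ext)
  fix m
  have "(1 + fps_const w * fps_X^a) * VF w (B - {a}) = VF w (B - {a}) + fps_X^a * (fps_const w * VF w (B - {a}))"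
    by (simp add: algebra_simps)
  then show "VF w B $ m = ((1 + fps_const w * fps_X^a) * VF w (B - {a})) $ m"
    using V_rec[OF assms, of w m] by (simp add: VF_def fps_X_power_mult_nth)
qed

lemma VF_finite:
  assumes "finite S" "0 \<notin> S"
  shows "VF w S = (\<Prod>k\<in>S. 1 + fps_const w * fps_X^k)"
  using assms
proof (induction S rule: finite_induct)
  case empty
  then show ?case by (simp add: VF_empty)
next
  case (insert a S)
  then show ?case using VF_rec[of a "insert a S" w] by simp
qed

definition DA :: "nat \<Rightarrow> int fps" where
  "DA a = Abs_fps (\<lambda>k. if 0 < k \<and> a dvd k then 1 else 0)"

definition GA :: "nat \<Rightarrow> int fps" where
  "GA a = Abs_fps (\<lambda>k. if 0 < k \<and> a dvd k then (-1) ^ (k div a - 1) else 0)"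

lemma DA_eq:
  assumes "a > 0"
  shows "DA a * (1 - fps_X^a) = fps_X^a"
proof (rule fps_ext)
  fix m
  have "DA a * (1 - fps_X^a) = DA a - DA a * fps_X^a" by (simp add: algebra_simps)
  moreover have "(DA a - DA a * fps_X^a) $ m = (if m = a then 1 else 0)"
  proof (cases "m < a")
    case True
    then show ?thesis using assms by (auto simp: DA_def fps_X_power_mult_right_nth dest: dvd_imp_le)
  next
    case False
    then show ?thesis using assms by (auto simp: DA_def fps_X_power_mult_right_nth dvd_minus_self)
  qed
  ultimately show "(DA a * (1 - fps_X^a)) $ m = (fps_X^a :: int fps) $ m" by simp
qed

lemma GA_eq:
  assumes "a > 0"
  shows "GA a * (1 + fps_X^a) = fps_X^a"
proof (rule fps_ext)
  fix m
  have "GA a * (1 + fps_X^a) = GA a + GA a * fps_X^a" by (simp add: algebra_simps)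
  moreover have "(GA a + GA a * fps_X^a) $ m = (if m = a then 1 else 0)"
  proof (cases "m < a")
    case True
    then show ?thesis using assms by (auto simp: GA_def fps_X_power_mult_right_nth dest: dvd_imp_le)
  next
    case False
    show ?thesis
    proof (cases "a dvd m")
      case True
      then obtain q where q: "m = a * q" by blast
      show ?thesis
      proof (cases "m = a")
        case True
        then show ?thesis using assms by (simp add: GA_def fps_X_power_mult_right_nth)
      next
        case ne: False
        then have "q \<ge> 2" using q False assms by (cases q; cases "q - 1"; auto)
        then obtain r where r: "q = Suc (Suc r)" by (metis add_2_eq_Suc le_Suc_ex)
        have "m - a = a * Suc r" using q r by (simp add: algebra_simps)
        then show ?thesis using q r assms ne False by (simp add: GA_def fps_X_power_mult_right_nth)
      qed
    next
      case nd: False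
      then have "\<not> a dvd (m - a)" using False by (simp add: dvd_minus_self)
      then show ?thesis using nd assms by (auto simp: GA_def fps_X_power_mult_right_nth)
    qed
  qed
  ultimately show "(GA a * (1 + fps_X^a)) $ m = (fps_X^a :: int fps) $ m" by simp
qed

lemma cnt_rec:
  assumes "a \<in> B" "a > 0"
  shows "cnt a B m = (if a \<le> m then cnt a B (m - a) + W 1 B (m - a) else 0)"
proof -
  have "cnt a B m = (\<Sum>M\<in>partitions (B - {a}) m. int (count M a)) +
      (if a \<le> m then (\<Sum>M\<in>partitions B (m - a). int (count (add_mset a M) a)) else 0)"
    unfolding cnt_def by (rule sum_partitions_split[OF assms])
  also have "(\<Sum>M\<in>partitions (B - {a}) m. int (count M a)) = 0"
    by (intro sum.neutral) (auto simp: partitions_def count_eq_zero_iff)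
  also have "(\<Sum>M\<in>partitions B (m - a). int (count (add_mset a M) a)) = cnt a B (m - a) + W 1 B (m - a)"
    by (simp add: cnt_def W_def sum.distrib)
  finally show ?thesis by simp
qed

lemma cnt_fps:
  assumes "a \<in> B" "a > 0"
  shows "Abs_fps (cnt a B) = WF 1 B * DA a"
proof -
  have "Abs_fps (cnt a B) * (1 - fps_X^a) = fps_X^a * WF 1 B"
  proof (rule fps_ext)
    fix m
    have "Abs_fps (cnt a B) * (1 - fps_X^a) = Abs_fps (cnt a B) - fps_X^a * Abs_fps (cnt a B)"
      by (simp add: algebra_simps)
    then show "(Abs_fps (cnt a B) * (1 - fps_X^a)) $ m = (fps_X^a * WF 1 B) $ m"
      using cnt_rec[OF assms, of m] by (simp add: fps_X_power_mult_nth WF_def)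
  qed
  also have "fps_X^a * WF 1 B = (WF 1 B * DA a) * (1 - fps_X^a)"
  proof -
    have "(WF 1 B * DA a) * (1 - fps_X^a) = WF 1 B * fps_X^a"
      by (simp only: mult.assoc DA_eq[OF assms(2)])
    then show ?thesis by (metis mult.commute)
  qed
  finally have "Abs_fps (cnt a B) * (1 - fps_X^a) = (WF 1 B * DA a) * (1 - fps_X^a)" .
  moreover have "(1 - fps_X^a :: int fps) \<noteq> 0"
  proof
    assume "(1 - fps_X^a :: int fps) = 0"
    then have "(1 - fps_X^a :: int fps) $ 0 = 0" by simp
    then show False using assms by simp
  qed
  ultimately show ?thesis by simp
qed

lemma dcnt_rec:
  assumes "a \<in> B" "a > 0"
  shows "dcnt a B m = (if a \<le> m then V 1 (B - {a}) (m - a) else 0)"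
proof (cases "a \<le> m")
  case True
  then show ?thesis
    using bij_betw_same_card[OF dpartitions_in_bij[OF assms True]]
    by (simp add: dcnt_def V_def)
next
  case False
  have e: "{S\<in>dpartitions B m. a \<in> S} = {}" using False by (intro dpartitions_in_empty) simp
  show ?thesis unfolding dcnt_def e using False by simp
qed

lemma dcnt_fps:
  assumes "a \<in> B" "a > 0"
  shows "Abs_fps (dcnt a B) = GA a * VF 1 B"
proof -
  have "Abs_fps (dcnt a B) = fps_X^a * VF 1 (B - {a})"
    by (rule fps_ext) (simp add: dcnt_rec[OF assms] fps_X_power_mult_nth VF_def)
  also have "\<dots> = GA a * (1 + fps_X^a) * VF 1 (B - {a})"
    using GA_eq[OF assms(2)] by simp
  also have "\<dots> = GA a * VF 1 B"
    using VF_rec[OF assms, of 1] by (simp add: mult.assoc)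
  finally show ?thesis .
qed





lemma eqn_refl[simp]: "eqn n a a" by (simp add: eqn_def)
lemma eqn_of_eq: "a = b \<Longrightarrow> eqn n a b" by simp
lemma eqn_sym: "eqn n a b \<Longrightarrow> eqn n b a" by (simp add: eqn_def)
lemma eqn_trans[trans]: "eqn n a b \<Longrightarrow> eqn n b c \<Longrightarrow> eqn n a c" by (simp add: eqn_def)
lemma eqn_trans_eq1[trans]: "a = b \<Longrightarrow> eqn n b c \<Longrightarrow> eqn n a c" by simp
lemma eqn_trans_eq2[trans]: "eqn n a b \<Longrightarrow> b = c \<Longrightarrow> eqn n a c" by simp

lemma eqn_mult: "eqn n a b \<Longrightarrow> eqn n c d \<Longrightarrow> eqn n (a * c) (b * d)"
  unfolding eqn_def fps_mult_nth by (auto intro!: sum.cong)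

lemma eqn_prod:
  "(\<And>k. k \<in> S \<Longrightarrow> eqn n (f k) (g k)) \<Longrightarrow> eqn n (\<Prod>k\<in>S. f k) (\<Prod>k\<in>S. g k)"
proof (induction S rule: infinite_finite_induct)
  case (infinite A)
  then show ?case by simp
next
  case empty
  then show ?case by simp
next
  case (insert x F)
  then show ?case by (simp add: eqn_mult)
qed

lemma eqn_cancel:
  assumes u0: "u $ 0 = 1" and h: "eqn n (a * u) (b * u)"
  shows "eqn n a b"
proof -
  define d where "d = a - b"
  have du: "(d * u) $ i = 0" if "i \<le> n" for i
    using h that unfolding eqn_def d_def by (simp add: algebra_simps)
  have "d $ i = 0" if "i \<le> n" for i
    using that
  proof (induction i rule: less_induct)
    case (less i)
    have "(d * u) $ i = (\<Sum>j=0..i. d $ j * u $ (i - j))" by (rule fps_mult_nth)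
    also have "\<dots> = (\<Sum>j\<in>{0..<i}. d $ j * u $ (i - j)) + d $ i * u $ 0"
      by (simp add: atLeastLessThanSuc_atLeastAtMost[symmetric])
    also have "(\<Sum>j\<in>{0..<i}. d $ j * u $ (i - j)) = 0"
      using less by (intro sum.neutral) auto
    finally show ?case using du[OF less.prems] u0 by simp
  qed
  then show ?thesis unfolding eqn_def d_def by simp
qed

lemma eqn_X_big: "n < j \<Longrightarrow> eqn n (1 - fps_X^j :: int fps) 1"
  unfolding eqn_def by auto

lemma prod_nth0: "(\<Prod>k\<in>S. f k) $ 0 = (\<Prod>k\<in>S. f k $ 0)"
  by (induction S rule: infinite_finite_induct) auto

lemma prod_pm_nth0:
  assumes "0 \<notin> S"
  shows "(\<Prod>k\<in>S. 1 + c * fps_X^k :: int fps) $ 0 = 1"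
proof -
  have "(1 + c * fps_X^k :: int fps) $ 0 = 1" if "k \<in> S" for k
  proof -
    have "k \<noteq> 0" using assms that by metis
    then show ?thesis by (cases k) simp_all
  qed
  then show ?thesis unfolding prod_nth0 by (intro prod.neutral) blast
qed

lemma partitions_trunc:
  assumes "m \<le> n"
  shows "partitions B m = partitions (B \<inter> {1..n}) m"
proof -
  have "x \<in> {1..n}" if "M \<in> partitions B m" "x \<in># M" for M x
    using that mem_le_sum_mset[of x M] assms
    by (auto simp: partitions_def) (metis Suc_leI neq0_conv)
  then show ?thesis by (auto simp: partitions_def)
qed

lemma dpartitions_trunc:
  assumes "m \<le> n"
  shows "dpartitions B m = dpartitions (B \<inter> {1..n}) m"
proof -
  have "x \<in> {1..n}" if "S \<in> dpartitions B m" "x \<in> S" for S x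
    using that member_le_sum[of x S "\<lambda>x. x"] assms
    by (auto simp: dpartitions_def) (metis Suc_leI neq0_conv)
  then show ?thesis by (auto simp: dpartitions_def)
qed

lemma WF_trunc: "eqn n (WF w B) (WF w (B \<inter> {1..n}))"
  unfolding eqn_def WF_def W_def
proof (intro allI impI)
  fix i assume "i \<le> n"
  then have e: "partitions B i = partitions (B \<inter> {1..n}) i" by (rule partitions_trunc)
  show "Abs_fps (\<lambda>m. \<Sum>M\<in>partitions B m. w ^ size M) $ i =
        Abs_fps (\<lambda>m. \<Sum>M\<in>partitions (B \<inter> {1..n}) m. w ^ size M) $ i"
    by (simp only: fps_nth_Abs_fps e)
qed

lemma VF_trunc: "eqn n (VF w B) (VF w (B \<inter> {1..n}))"
  unfolding eqn_def VF_def V_def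
proof (intro allI impI)
  fix i assume "i \<le> n"
  then have e: "dpartitions B i = dpartitions (B \<inter> {1..n}) i" by (rule dpartitions_trunc)
  show "Abs_fps (\<lambda>m. \<Sum>S\<in>dpartitions B m. w ^ card S) $ i =
        Abs_fps (\<lambda>m. \<Sum>S\<in>dpartitions (B \<inter> {1..n}) m. w ^ card S) $ i"
    by (simp only: fps_nth_Abs_fps e)
qed

lemma signed_card:
  assumes "finite X"
  shows "(\<Sum>x\<in>X. (-1::int) ^ g x) = int (card {x\<in>X. even (g x)}) - int (card {x\<in>X. odd (g x)})"
proof -
  have "(\<Sum>x\<in>X. (-1::int) ^ g x) = (\<Sum>x\<in>X. if even (g x) then 1 else -1)"
    by (intro sum.cong) auto
  also have "\<dots> = (\<Sum>x\<in>X \<inter> {x. even (g x)}. 1) + (\<Sum>x\<in>X \<inter> - {x. even (g x)}. -1)"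
    by (rule sum.If_cases[OF assms])
  also have "X \<inter> {x. even (g x)} = {x\<in>X. even (g x)}" by auto
  also have "X \<inter> - {x. even (g x)} = {x\<in>X. odd (g x)}" by auto
  finally show ?thesis by simp
qed

lemma qe_qo: "qe B m - qo B m = V (-1) B m"
  unfolding qe_def qo_def V_def using signed_card[OF finite_dpartitions] by metis

lemma pe_po: "pe B m - po B m = W (-1) B m"
  unfolding pe_def po_def W_def using signed_card[OF finite_partitions] by metis

lemma odd_sum_parity:
  assumes "finite S" "\<forall>x\<in>S. odd x"
  shows "(-1::int) ^ (\<Sum>S) = (-1) ^ card S"
  using assms by (induction S rule: finite_induct) (auto simp: power_add)

lemma odp_signed: "(-1) ^ m * odp m = V (-1) {k. odd k} m"
proof -
  have "V (-1) {k. odd k} m = (\<Sum>S\<in>dpartitions {k. odd k} m. (-1) ^ m)"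
    unfolding V_def
  proof (intro sum.cong refl)
    fix S assume "S \<in> dpartitions {k. odd k} m"
    then have "finite S" "\<forall>x\<in>S. odd x" "\<Sum>S = m" by (auto simp: dpartitions_def)
    then show "(-1::int) ^ card S = (-1) ^ m" using odd_sum_parity by metis
  qed
  then show ?thesis by (simp add: odp_def mult.commute)
qed


lemma prod_1pX_nth0:
  assumes "0 \<notin> S"
  shows "(\<Prod>k\<in>S. 1 + fps_X^k :: int fps) $ 0 = 1"
proof -
  have "(1 + fps_X^k :: int fps) $ 0 = 1" if "k \<in> S" for k
  proof -
    have "k \<noteq> 0" using assms that by metis
    then show ?thesis by (cases k) simp_all
  qed
  then show ?thesis unfolding prod_nth0 by (intro prod.neutral) blast
qed

lemma prod_1mX_nth0:
  assumes "0 \<notin> S"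
  shows "(\<Prod>k\<in>S. 1 - fps_X^k :: int fps) $ 0 = 1"
proof -
  have "(1 - fps_X^k :: int fps) $ 0 = 1" if "k \<in> S" for k
  proof -
    have "k \<noteq> 0" using assms that by metis
    then show ?thesis by (cases k) simp_all
  qed
  then show ?thesis unfolding prod_nth0 by (intro prod.neutral) blast
qed

lemma Np_sum_cnt:
  assumes "0 \<notin> A" "m \<le> n"
  shows "Np A m = (\<Sum>a\<in>A \<inter> {1..n}. cnt a A m)"
proof -
  have "Np A m = (\<Sum>M\<in>partitions A m. \<Sum>a\<in>A \<inter> {1..n}. int (count M a))"
    unfolding Np_def
  proof (intro sum.cong refl)
    fix M assume "M \<in> partitions A m"
    then have "M \<in> partitions (A \<inter> {1..n}) m" using partitions_trunc[OF assms(2)] by blast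
    then have "set_mset M \<subseteq> A \<inter> {1..n}" by (simp add: partitions_def)
    then have "size M = (\<Sum>a\<in>A \<inter> {1..n}. count M a)" by (intro size_as_sum_count) auto
    then show "int (size M) = (\<Sum>a\<in>A \<inter> {1..n}. int (count M a))" by simp
  qed
  also have "\<dots> = (\<Sum>a\<in>A \<inter> {1..n}. cnt a A m)"
    unfolding cnt_def by (rule sum.swap)
  finally show ?thesis .
qed

lemma NP_eqn:
  assumes "0 \<notin> A"
  shows "eqn n (Abs_fps (Np A)) (WF 1 A * (\<Sum>a\<in>A \<inter> {1..n}. DA a))"
  unfolding eqn_def
proof (intro allI impI)
  fix i assume i: "i \<le> n"
  have "Abs_fps (Np A) $ i = (\<Sum>a\<in>A \<inter> {1..n}. Abs_fps (cnt a A) $ i)"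
    using Np_sum_cnt[OF assms i] by simp
  also have "\<dots> = (\<Sum>a\<in>A \<inter> {1..n}. (WF 1 A * DA a) $ i)"
    by (intro sum.cong refl) (subst cnt_fps, auto)
  also have "\<dots> = (WF 1 A * (\<Sum>a\<in>A \<inter> {1..n}. DA a)) $ i"
    by (simp add: sum_distrib_left fps_sum_nth)
  finally show "Abs_fps (Np A) $ i = (WF 1 A * (\<Sum>a\<in>A \<inter> {1..n}. DA a)) $ i" .
qed

lemma divisors_trunc:
  assumes "0 \<notin> A" "0 < i" "i \<le> n"
  shows "{a \<in> A \<inter> {1..n}. a dvd i} = {a\<in>(A::nat set). a dvd i}"
proof -
  have "a \<in> {1..n}" if "a \<in> A" "a dvd i" for a
  proof -
    have "a \<noteq> 0" using that assms by metis
    moreover have "a \<le> i" using that assms by (auto intro: dvd_imp_le)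
    ultimately show ?thesis using assms by simp
  qed
  then show ?thesis by auto
qed

lemma SD_eqn:
  assumes "0 \<notin> A"
  shows "eqn n (\<Sum>a\<in>A \<inter> {1..n}. DA a) (Abs_fps (\<lambda>k. if k = 0 then 0 else tauA A k))"
  unfolding eqn_def
proof (intro allI impI)
  fix i assume i: "i \<le> n"
  show "(\<Sum>a\<in>A \<inter> {1..n}. DA a) $ i = Abs_fps (\<lambda>k. if k = 0 then 0 else tauA A k) $ i"
  proof (cases "i = 0")
    case True
    then show ?thesis by (simp add: fps_sum_nth DA_def)
  next
    case False
    have "(\<Sum>a\<in>A \<inter> {1..n}. DA a) $ i = (\<Sum>a\<in>A \<inter> {1..n}. if a dvd i then 1 else 0)"
      using False by (simp add: fps_sum_nth DA_def)
    also have "\<dots> = (\<Sum>a\<in>{a \<in> A \<inter> {1..n}. a dvd i}. 1)"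
      by (rule sum.inter_filter[symmetric]) simp
    also have "{a \<in> A \<inter> {1..n}. a dvd i} = {a\<in>A. a dvd i}"
      using divisors_trunc[OF assms _ i] False by simp
    finally show ?thesis using False by (simp add: tauA_def)
  qed
qed

lemma Nq_sum_dcnt:
  assumes "0 \<notin> A" "m \<le> n"
  shows "Nq A m = (\<Sum>a\<in>A \<inter> {1..n}. dcnt a A m)"
proof -
  have "Nq A m = (\<Sum>S\<in>dpartitions A m. \<Sum>a\<in>A \<inter> {1..n}. if a \<in> S then 1 else 0)"
    unfolding Nq_def
  proof (intro sum.cong refl)
    fix S assume "S \<in> dpartitions A m"
    then have "S \<in> dpartitions (A \<inter> {1..n}) m" using dpartitions_trunc[OF assms(2)] by blast
    then have sub: "S \<subseteq> A \<inter> {1..n}" by (simp add: dpartitions_def)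
    have "(\<Sum>a\<in>A \<inter> {1..n}. if a \<in> S then 1 else 0) = (\<Sum>a\<in>{a\<in>A \<inter> {1..n}. a \<in> S}. 1::int)"
      by (rule sum.inter_filter[symmetric]) simp
    also have "{a\<in>A \<inter> {1..n}. a \<in> S} = S" using sub by auto
    finally show "int (card S) = (\<Sum>a\<in>A \<inter> {1..n}. if a \<in> S then 1 else 0)" by simp
  qed
  also have "\<dots> = (\<Sum>a\<in>A \<inter> {1..n}. \<Sum>S\<in>dpartitions A m. if a \<in> S then 1 else 0)"
    by (rule sum.swap)
  also have "\<dots> = (\<Sum>a\<in>A \<inter> {1..n}. dcnt a A m)"
  proof (intro sum.cong refl)
    fix a
    have "(\<Sum>S\<in>dpartitions A m. if a \<in> S then 1 else 0) = (\<Sum>S\<in>{S\<in>dpartitions A m. a \<in> S}. 1::int)"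
      by (rule sum.inter_filter[symmetric]) (rule finite_dpartitions)
    then show "(\<Sum>S\<in>dpartitions A m. if a \<in> S then 1 else 0) = dcnt a A m"
      by (simp add: dcnt_def)
  qed
  finally show ?thesis .
qed

lemma NQ_eqn:
  assumes "0 \<notin> A"
  shows "eqn n (Abs_fps (Nq A)) (VF 1 A * (\<Sum>a\<in>A \<inter> {1..n}. GA a))"
  unfolding eqn_def
proof (intro allI impI)
  fix i assume i: "i \<le> n"
  have "Abs_fps (Nq A) $ i = (\<Sum>a\<in>A \<inter> {1..n}. Abs_fps (dcnt a A) $ i)"
    using Nq_sum_dcnt[OF assms i] by simp
  also have "\<dots> = (\<Sum>a\<in>A \<inter> {1..n}. (GA a * VF 1 A) $ i)"
    by (intro sum.cong refl) (subst dcnt_fps, auto)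
  also have "\<dots> = (VF 1 A * (\<Sum>a\<in>A \<inter> {1..n}. GA a)) $ i"
    by (simp add: sum_distrib_left fps_sum_nth mult.commute)
  finally show "Abs_fps (Nq A) $ i = (VF 1 A * (\<Sum>a\<in>A \<inter> {1..n}. GA a)) $ i" .
qed

lemma SG_eqn:
  assumes "0 \<notin> A"
  shows "eqn n (\<Sum>a\<in>A \<inter> {1..n}. GA a) (Abs_fps (\<lambda>k. if k = 0 then 0 else tausA A k))"
  unfolding eqn_def
proof (intro allI impI)
  fix i assume i: "i \<le> n"
  show "(\<Sum>a\<in>A \<inter> {1..n}. GA a) $ i = Abs_fps (\<lambda>k. if k = 0 then 0 else tausA A k) $ i"
  proof (cases "i = 0")
    case True
    then show ?thesis by (simp add: fps_sum_nth GA_def)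
  next
    case False
    have "(\<Sum>a\<in>A \<inter> {1..n}. GA a) $ i = (\<Sum>a\<in>A \<inter> {1..n}. if a dvd i then (-1) ^ (i div a - 1) else 0)"
      using False by (simp add: fps_sum_nth GA_def)
    also have "\<dots> = (\<Sum>a\<in>{a \<in> A \<inter> {1..n}. a dvd i}. (-1) ^ (i div a - 1))"
      by (rule sum.inter_filter[symmetric]) simp
    also have "{a \<in> A \<inter> {1..n}. a dvd i} = {a\<in>A. a dvd i}"
      using divisors_trunc[OF assms _ i] False by simp
    finally show ?thesis using False by (simp add: tausA_def)
  qed
qed

lemma Np_0: "Np A 0 = 0"
  unfolding Np_def
proof (intro sum.neutral ballI)
  fix M assume "M \<in> partitions A 0"
  then have "0 \<notin># M" "sum_mset M = 0" by (auto simp: partitions_def)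
  then have "size M = 0" using size_le_sum_mset by (metis le_zero_eq)
  then show "int (size M) = 0" by simp
qed

lemma Nq_0: "Nq A 0 = 0"
  unfolding Nq_def
proof (intro sum.neutral ballI)
  fix S assume "S \<in> dpartitions A 0"
  then have h: "finite S" "0 \<notin> S" "\<Sum>S = 0" by (auto simp: dpartitions_def)
  then have "S = {}" using sum_eq_0_iff[of S "\<lambda>x. x"] by auto
  then show "int (card S) = 0" by simp
qed





lemma odd_even_key:
  "eqn n ((\<Prod>k\<in>{1..n}. 1 + fps_X^k) * (\<Prod>k\<in>{k. odd k} \<inter> {1..n}. 1 - fps_X^k)) (1 :: int fps)"
proof -
  define U where "U = {1..(n::nat)}"
  define EU where "EU = {k. even k} \<inter> U"
  define OU where "OU = {k. odd k} \<inter> U"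
  define P1 :: "int fps" where "P1 = (\<Prod>k\<in>U. 1 + fps_X^k)"
  define PE :: "int fps" where "PE = (\<Prod>k\<in>EU. 1 - fps_X^k)"
  define PO :: "int fps" where "PO = (\<Prod>k\<in>OU. 1 - fps_X^k)"
  define U1 where "U1 = {k\<in>U. 2 * k \<le> n}"
  define U2 where "U2 = {k\<in>U. \<not> 2 * k \<le> n}"
  have finU: "finite U" "finite EU" "finite OU" "finite U1" "finite U2"
    by (auto simp: U_def EU_def OU_def U1_def U2_def)
  have "(\<Prod>k\<in>U. 1 - fps_X^k :: int fps) = PE * PO"
  proof -
    have "U = EU \<union> OU" "EU \<inter> OU = {}" by (auto simp: EU_def OU_def)
    then show ?thesis unfolding PE_def PO_def using finU by (simp add: prod.union_disjoint)
  qed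
  then have "P1 * PE * PO = (\<Prod>k\<in>U. (1 + fps_X^k) * (1 - fps_X^k :: int fps))"
    unfolding P1_def by (simp add: prod.distrib mult.assoc)
  also have "\<dots> = (\<Prod>k\<in>U. 1 - fps_X^(2 * k))"
  proof (intro prod.cong refl)
    fix k
    have "(fps_X :: int fps)^(2 * k) = fps_X^k * fps_X^k" by (simp add: mult_2 power_add)
    then show "(1 + fps_X^k) * (1 - fps_X^k :: int fps) = 1 - fps_X^(2 * k)"
      by (simp add: algebra_simps)
  qed
  also have "\<dots> = (\<Prod>k\<in>U1. 1 - fps_X^(2 * k)) * (\<Prod>k\<in>U2. 1 - fps_X^(2 * k))"
  proof -
    have "U = U1 \<union> U2" "U1 \<inter> U2 = {}" by (auto simp: U1_def U2_def)
    then show ?thesis using finU by (simp add: prod.union_disjoint)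
  qed
  also have "(\<Prod>k\<in>U1. 1 - fps_X^(2 * k)) = PE"
  proof -
    have "bij_betw (\<lambda>k. 2 * k) U1 EU"
    proof (rule bij_betw_byWitness[where f' = "\<lambda>j. j div 2"])
      show "\<forall>a\<in>U1. 2 * a div 2 = a" by simp
      show "\<forall>a'\<in>EU. 2 * (a' div 2) = a'" by (auto simp: EU_def)
      show "(\<lambda>k. 2 * k) ` U1 \<subseteq> EU" by (auto simp: U1_def EU_def U_def)
      show "(\<lambda>j. j div 2) ` EU \<subseteq> U1"
      proof
        fix x assume "x \<in> (\<lambda>j. j div 2) ` EU"
        then obtain j where j: "j \<in> EU" "x = j div 2" by auto
        then have "even j" "1 \<le> j" "j \<le> n" by (auto simp: EU_def U_def)
        then have "2 * x = j" "1 \<le> x" using j(2) by auto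
        then show "x \<in> U1" using \<open>j \<le> n\<close> by (auto simp: U1_def U_def)
      qed
    qed
    then show ?thesis unfolding PE_def
      by (rule prod.reindex_bij_betw[where g = "\<lambda>j. 1 - fps_X^j"])
  qed
  finally have eq: "P1 * PE * PO = PE * (\<Prod>k\<in>U2. 1 - fps_X^(2 * k))" .
  have "eqn n (\<Prod>k\<in>U2. 1 - fps_X^(2 * k) :: int fps) (\<Prod>k\<in>U2. 1)"
    by (intro eqn_prod eqn_X_big) (auto simp: U2_def)
  then have X: "eqn n (PE * (\<Prod>k\<in>U2. 1 - fps_X^(2 * k))) (PE * 1)"
    by (intro eqn_mult) auto
  have Y: "(P1 * PO) * PE = P1 * PE * PO"
    by (simp only: mult.assoc mult.commute mult.left_commute)
  have Z: "(P1 * PO) * PE = PE * (\<Prod>k\<in>U2. 1 - fps_X^(2 * k))"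
    using trans[OF Y eq] .
  have "eqn n ((P1 * PO) * PE) (1 * PE)"
    unfolding Z using X by (simp only: mult_1_left mult_1_right)
  moreover have "PE $ 0 = 1" unfolding PE_def by (rule prod_1mX_nth0) (auto simp: EU_def U_def)
  ultimately have "eqn n (P1 * PO) 1" using eqn_cancel by blast
  then show ?thesis by (simp add: P1_def PO_def OU_def U_def)
qed


lemma fps_const_m1: "fps_const (-1 :: int) = - 1"
  by (metis fps_const_1_eq_1 fps_const_neg)

lemma split_U:
  assumes "0 \<notin> A"
  shows "{1..n} = (A \<inter> {1..n}) \<union> (compl_pos A \<inter> {1..n})"
        "(A \<inter> {1..n}) \<inter> (compl_pos A \<inter> {1..n}) = {}"
  by (auto simp: compl_pos_def)

lemma part_a:
  assumes A0: "0 \<notin> A"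
  shows "(\<Sum>k=1..n. Np A k * omega (n - k))
           = (\<Sum>k=1..n. tauA A k * (qe (compl_pos A) (n - k) - qo (compl_pos A) (n - k)))"
proof -
  define C where "C = compl_pos A"
  define AU where "AU = A \<inter> {1..n}"
  define CU where "CU = C \<inter> {1..n}"
  define SD where "SD = (\<Sum>a\<in>AU. DA a)"
  define TA where "TA = Abs_fps (\<lambda>k. if k = 0 then 0 else tauA A k)"
  define PA :: "int fps" where "PA = (\<Prod>k\<in>AU. 1 - fps_X^k)"
  define PC :: "int fps" where "PC = (\<Prod>k\<in>CU. 1 - fps_X^k)"
  have fin: "finite AU" "finite CU" by (auto simp: AU_def CU_def)
  have z: "0 \<notin> AU" "0 \<notin> CU" by (auto simp: AU_def CU_def C_def compl_pos_def)
  have E: "(\<Prod>k\<in>{1..n}. 1 - fps_X^k :: int fps) = PA * PC"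
  proof -
    have u: "(A \<inter> {1..n}) \<union> (compl_pos A \<inter> {1..n}) = {1..n}" using split_U[OF A0, of n] by blast
    have "(\<Prod>k\<in>{1..n}. 1 - fps_X^k :: int fps) = (\<Prod>k\<in>(A \<inter> {1..n}) \<union> (compl_pos A \<inter> {1..n}). 1 - fps_X^k)"
      by (simp only: u)
    also have "\<dots> = (\<Prod>k\<in>A \<inter> {1..n}. 1 - fps_X^k) * (\<Prod>k\<in>compl_pos A \<inter> {1..n}. 1 - fps_X^k)"
      by (rule prod.union_disjoint) (auto simp: compl_pos_def)
    finally show ?thesis by (simp only: PA_def PC_def AU_def CU_def C_def)
  qed
  have OM: "eqn n (Abs_fps omega) (PA * PC)"
    unfolding E[symmetric] eqn_def using pentagonal by simp
  have WA: "WF 1 AU * PA = 1"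
    using WF_finite[OF fin(1) z(1), of 1] by (simp add: PA_def)
  have VC: "VF (-1) CU = PC"
    using VF_finite[OF fin(2) z(2), of "-1"] by (simp add: PC_def fps_const_m1)
  have QC: "Abs_fps (\<lambda>m. qe C m - qo C m) = VF (-1) C"
    by (rule fps_ext) (simp add: qe_qo VF_def)
  have NP: "eqn n (Abs_fps (Np A)) (WF 1 A * SD)"
    unfolding SD_def AU_def by (rule NP_eqn[OF A0])
  have "eqn n (Abs_fps (Np A) * Abs_fps omega) ((WF 1 A * SD) * (PA * PC))"
    by (rule eqn_mult[OF NP OM])
  also have "(WF 1 A * SD) * (PA * PC) = SD * (WF 1 A * PA) * PC"
    by (simp only: mult.assoc mult.commute mult.left_commute)
  also have "eqn n (SD * (WF 1 A * PA) * PC) (SD * (WF 1 AU * PA) * PC)"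
    by (intro eqn_mult eqn_refl) (simp only: AU_def WF_trunc)
  also have "SD * (WF 1 AU * PA) * PC = SD * VF (-1) CU"
    by (simp only: WA VC mult_1_right)
  also have "eqn n (SD * VF (-1) CU) (TA * VF (-1) C)"
    by (intro eqn_mult eqn_sym[OF VF_trunc[of n "-1" C, folded CU_def]])
       (simp only: SD_def TA_def AU_def SD_eqn[OF A0])
  also have "TA * VF (-1) C = TA * Abs_fps (\<lambda>m. qe C m - qo C m)"
    by (simp only: QC)
  finally have "(Abs_fps (Np A) * Abs_fps omega) $ n = (TA * Abs_fps (\<lambda>m. qe C m - qo C m)) $ n"
    by (simp add: eqn_def)
  then have "(\<Sum>i=0..n. Np A i * omega (n - i)) = (\<Sum>i=0..n. TA $ i * (qe C (n - i) - qo C (n - i)))"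
    by (simp add: fps_mult_nth)
  then show ?thesis
    by (simp add: sum.atLeast_Suc_atMost Np_0 TA_def C_def)
qed

lemma part_b:
  assumes A0: "0 \<notin> A"
  shows "(\<Sum>k=1..n. (-1) ^ (n - k) * Nq A k * odp (n - k))
           = (\<Sum>k=1..n. tausA A k * (pe (compl_pos A) (n - k) - po (compl_pos A) (n - k)))"
proof -
  define C where "C = compl_pos A"
  define AU where "AU = A \<inter> {1..n}"
  define CU where "CU = C \<inter> {1..n}"
  define OU where "OU = {k. odd k} \<inter> {1..n}"
  define SG where "SG = (\<Sum>a\<in>AU. GA a)"
  define TS where "TS = Abs_fps (\<lambda>k. if k = 0 then 0 else tausA A k)"
  define PA :: "int fps" where "PA = (\<Prod>k\<in>AU. 1 + fps_X^k)"
  define u :: "int fps" where "u = (\<Prod>k\<in>CU. 1 + fps_X^k)"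
  define PO :: "int fps" where "PO = (\<Prod>k\<in>OU. 1 - fps_X^k)"
  define OD where "OD = Abs_fps (\<lambda>m. (-1) ^ m * odp m)"
  define SP where "SP = Abs_fps (\<lambda>m. pe C m - po C m)"
  have fin: "finite AU" "finite CU" "finite OU" by (auto simp: AU_def CU_def OU_def)
  have z: "0 \<notin> AU" "0 \<notin> CU" "0 \<notin> OU" by (auto simp: AU_def CU_def C_def compl_pos_def OU_def)
  have P1: "(\<Prod>k\<in>{1..n}. 1 + fps_X^k :: int fps) = PA * u"
  proof -
    have u: "(A \<inter> {1..n}) \<union> (compl_pos A \<inter> {1..n}) = {1..n}" using split_U[OF A0, of n] by blast
    have "(\<Prod>k\<in>{1..n}. 1 + fps_X^k :: int fps) = (\<Prod>k\<in>(A \<inter> {1..n}) \<union> (compl_pos A \<inter> {1..n}). 1 + fps_X^k)"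
      by (simp only: u)
    also have "\<dots> = (\<Prod>k\<in>A \<inter> {1..n}. 1 + fps_X^k) * (\<Prod>k\<in>compl_pos A \<inter> {1..n}. 1 + fps_X^k)"
      by (rule prod.union_disjoint) (auto simp: compl_pos_def)
    finally show ?thesis by (simp only: PA_def u_def AU_def CU_def C_def)
  qed
  have key: "eqn n ((PA * u) * PO) 1"
    using odd_even_key[of n] unfolding P1 PO_def OU_def .
  have VA: "VF 1 AU = PA"
    using VF_finite[OF fin(1) z(1), of 1] by (simp add: PA_def)
  have VO: "VF (-1) OU = PO"
    using VF_finite[OF fin(3) z(3), of "-1"] by (simp add: PO_def fps_const_m1)
  have WC: "WF (-1) CU * u = 1"
    using WF_finite[OF fin(2) z(2), of "-1"] by (simp add: u_def fps_const_m1)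
  have ODe: "OD = VF (-1) {k. odd k}"
    unfolding OD_def by (rule fps_ext) (simp add: odp_signed VF_def)
  have SPe: "SP = WF (-1) C"
    unfolding SP_def by (rule fps_ext) (simp add: pe_po WF_def)
  have u0: "u $ 0 = 1" unfolding u_def by (rule prod_1pX_nth0[OF z(2)])
  have NQ: "eqn n (Abs_fps (Nq A)) (VF 1 A * SG)"
    unfolding SG_def AU_def by (rule NQ_eqn[OF A0])
  have L: "eqn n (Abs_fps (Nq A) * OD * u) TS"
  proof -
    have "eqn n (Abs_fps (Nq A) * OD * u) ((VF 1 A * SG) * VF (-1) OU * u)"
      unfolding ODe by (intro eqn_mult NQ eqn_refl) (simp only: OU_def VF_trunc)
    also have "eqn n ((VF 1 A * SG) * VF (-1) OU * u) ((VF 1 AU * SG) * VF (-1) OU * u)"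
      by (intro eqn_mult eqn_refl) (simp only: AU_def VF_trunc)
    also have "(VF 1 AU * SG) * VF (-1) OU * u = SG * ((PA * u) * PO)"
      unfolding VA VO by (simp only: mult.assoc mult.commute mult.left_commute)
    also have "eqn n (SG * ((PA * u) * PO)) (TS * 1)"
      by (intro eqn_mult key) (simp only: SG_def TS_def AU_def SG_eqn[OF A0])
    finally show ?thesis by simp
  qed
  have R: "eqn n (TS * SP * u) TS"
  proof -
    have "TS * SP * u = TS * (WF (-1) C * u)" unfolding SPe by (simp only: mult.assoc)
    also have "eqn n (TS * (WF (-1) C * u)) (TS * (WF (-1) CU * u))"
      by (intro eqn_mult eqn_refl) (simp only: CU_def WF_trunc)
    also have "TS * (WF (-1) CU * u) = TS" by (simp only: WC mult_1_right)
    finally show ?thesis .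
  qed
  have "eqn n ((Abs_fps (Nq A) * OD) * u) ((TS * SP) * u)"
    using L eqn_sym[OF R] eqn_trans by blast
  then have "eqn n (Abs_fps (Nq A) * OD) (TS * SP)"
    by (rule eqn_cancel[OF u0])
  then have "(Abs_fps (Nq A) * OD) $ n = (TS * SP) $ n"
    by (simp add: eqn_def)
  then have "(\<Sum>i=0..n. Nq A i * ((-1) ^ (n - i) * odp (n - i))) = (\<Sum>i=0..n. TS $ i * (pe C (n - i) - po C (n - i)))"
    by (simp add: fps_mult_nth OD_def SP_def)
  then show ?thesis
    by (simp add: sum.atLeast_Suc_atMost Nq_0 TS_def C_def ac_simps)
qed


theorem theorem3:
  fixes A :: "nat set" and n :: nat
  assumes "A \<noteq> {}" and "0 \<notin> A" and "n > 0"
  shows "((\<Sum>k=1..n. Np A k * omega (n - k))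
           = (\<Sum>k=1..n. tauA A k * (qe (compl_pos A) (n - k) - qo (compl_pos A) (n - k)))) \<and>
         ((\<Sum>k=1..n. (-1) ^ (n - k) * Nq A k * odp (n - k))
           = (\<Sum>k=1..n. tausA A k * (pe (compl_pos A) (n - k) - po (compl_pos A) (n - k))))"
  using part_a[OF assms(2)] part_b[OF assms(2)] by blast

end
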